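(* Let $Q$ be a sequence, $G=(V,E,\delta)$ a pangenome graph, and $H$ the associated directed graph defined in the context. If $v_{(i_0,u_0,f_0)},v_{(i_1,u_1,f_1)},\dots,v_{(i_k,u_k,f_k)}$ is a directed path in $H$, then $Q_{i_0}Q_{i_1}\cdots Q_{i_k}$ is a common subsequence between $Q$ and $G$.
   Context: Strings are 0-indexed; $S_i$ is the character of $S$ at position $i$. A pangenome graph is a triple $G=(V,E,\delta)$ where $(V,E)$ is a finite directed graph and $\delta:V\to\Sigma^*\setminus\{\epsilon\}$ assigns to each vertex a nonempty string over an alphabet $\Sigma$. A path in $G$ is a sequence of vertices $P=w_0,\dots,w_k$ ($k\ge0$) with $(w_j,w_{j+1})\in E$ for $j<k$; $spell(P)=\delta(w_0)\cdots\delta(w_k)$. A sequence $S$ is a common subsequence between $Q$ and $G$ if there is a path $P$ in $G$ such that $S$ is a subsequence of both $Q$ and $spell(P)$. The directed graph $H$ has vertex set $\{v_{(i,u,f)}: 0\le i\le|Q|-1,\ u\in V,\ 0\le f\le|\delta(u)|-1,\ Q_i=\delta(u)_f\}$, and an edge from $v_{(i,u,f)}$ to $v_{(i',u',f')}$ if and only if $i<i'$ and either ($u\ne u'$ and there is a path from $u$ to $u'$ in $G$) or ($u=u'$ and $f<f'$). *)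

theory Defs
  imports Main "HOL-Library.Sublist"
begin

definition pangenome_graph :: "'v set \<Rightarrow> ('v \<times> 'v) set \<Rightarrow> ('v \<Rightarrow> 'c list) \<Rightarrow> bool" where
  "pangenome_graph V E \<delta> \<longleftrightarrow> finite V \<and> E \<subseteq> V \<times> V \<and> (\<forall>v\<in>V. \<delta> v \<noteq> [])"

definition is_path :: "'v set \<Rightarrow> ('v \<times> 'v) set \<Rightarrow> 'v list \<Rightarrow> bool" where
  "is_path V E P \<longleftrightarrow> P \<noteq> [] \<and> set P \<subseteq> V \<and> (\<forall>j. Suc j < length P \<longrightarrow> (P ! j, P ! Suc j) \<in> E)"

definition spell :: "('v \<Rightarrow> 'c list) \<Rightarrow> 'v list \<Rightarrow> 'c list" where
  "spell \<delta> P = concat (map \<delta> P)"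

definition common_subseq :: "'c list \<Rightarrow> 'v set \<Rightarrow> ('v \<times> 'v) set \<Rightarrow> ('v \<Rightarrow> 'c list) \<Rightarrow> 'c list \<Rightarrow> bool" where
  "common_subseq Q V E \<delta> S \<longleftrightarrow> (\<exists>P. is_path V E P \<and> subseq S Q \<and> subseq S (spell \<delta> P))"

definition has_path :: "'v set \<Rightarrow> ('v \<times> 'v) set \<Rightarrow> 'v \<Rightarrow> 'v \<Rightarrow> bool" where
  "has_path V E u u' \<longleftrightarrow> (\<exists>P. is_path V E P \<and> hd P = u \<and> last P = u')"

(* vertex set of H: triples (i, u, f) standing for v_(i,u,f) *)
definition H_vertices :: "'c list \<Rightarrow> 'v set \<Rightarrow> ('v \<Rightarrow> 'c list) \<Rightarrow> (nat \<times> 'v \<times> nat) set" where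
  "H_vertices Q V \<delta> = {(i, u, f). i < length Q \<and> u \<in> V \<and> f < length (\<delta> u) \<and> Q ! i = \<delta> u ! f}"

definition H_edges :: "'c list \<Rightarrow> 'v set \<Rightarrow> ('v \<times> 'v) set \<Rightarrow> ('v \<Rightarrow> 'c list) \<Rightarrow> ((nat \<times> 'v \<times> nat) \<times> (nat \<times> 'v \<times> nat)) set" where
  "H_edges Q V E \<delta> = {((i, u, f), (i', u', f')).
      (i, u, f) \<in> H_vertices Q V \<delta> \<and> (i', u', f') \<in> H_vertices Q V \<delta> \<and> i < i' \<and>
      ((u \<noteq> u' \<and> has_path V E u u') \<or> (u = u' \<and> f < f'))}"

end

theory Submission
  imports Defs
begin

lemma is_path_single: "is_path V E [a] \<longleftrightarrow> a \<in> V"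
  by (simp add: is_path_def)

lemma is_path_cons2: "is_path V E (a#b#xs) \<longleftrightarrow> a \<in> V \<and> (a,b) \<in> E \<and> is_path V E (b#xs)"
  unfolding is_path_def
  apply (auto simp: less_Suc_eq_0_disj)
  done

lemma is_path_append:
  "is_path V E R \<Longrightarrow> is_path V E P \<Longrightarrow> last R = hd P \<Longrightarrow> is_path V E (R @ tl P)"
proof (induction R rule: induct_list012)
  case 1 then show ?case by (simp add: is_path_def)
next
  case (2 x) then show ?case by (cases P) auto
next
  case (3 x y zs)
  then show ?case by (auto simp: is_path_cons2)
qed

lemma subseq_drop_mono: "subseq S (drop j Q) \<Longrightarrow> k \<le> j \<Longrightarrow> subseq S (drop k Q)"
proof -
  assume a: "subseq S (drop j Q)" "k \<le> j"
  have "suffix (drop j Q) (drop k Q)"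
    using a(2) by (metis drop_drop le_add_diff_inverse2 suffix_drop)
  then show ?thesis using a(1) by (meson subseq_order.trans suffix_imp_subseq)
qed

lemma subseq_drop_mono2: "subseq S (drop j xs @ ys) \<Longrightarrow> k \<le> j \<Longrightarrow> subseq S (drop k xs @ ys)"
proof -
  assume a: "subseq S (drop j xs @ ys)" "k \<le> j"
  have "suffix (drop j xs) (drop k xs)"
    using a(2) by (metis drop_drop le_add_diff_inverse2 suffix_drop)
  hence "suffix (drop j xs @ ys) (drop k xs @ ys)" by (auto simp: suffix_def)
  then show ?thesis using a(1) by (meson subseq_order.trans suffix_imp_subseq)
qed

lemma subseq_suffix_trans: "subseq S xs \<Longrightarrow> suffix xs ys \<Longrightarrow> subseq S ys"
  by (meson subseq_order.trans suffix_imp_subseq)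

lemma main_inv:
  assumes "is_path (H_vertices Q V \<delta>) (H_edges Q V E \<delta>) p"
  shows "\<exists>P. is_path V E P \<and> hd P = fst (snd (hd p))
     \<and> subseq (map (\<lambda>(i, u, f). Q ! i) p) (drop (fst (hd p)) Q)
     \<and> subseq (map (\<lambda>(i, u, f). Q ! i) p) (drop (snd (snd (hd p))) (\<delta> (fst (snd (hd p)))) @ concat (map \<delta> (tl P)))"
  using assms
proof (induction p)
  case Nil then show ?case by (simp add: is_path_def)
next
  case (Cons x p')
  obtain i u f where x: "x = (i,u,f)" by (cases x) auto
  show ?case
  proof (cases p')
    case Nil
    with Cons.prems x have v: "i < length Q" "u \<in> V" "f < length (\<delta> u)" "Q ! i = \<delta> u ! f"
      by (auto simp: is_path_single H_vertices_def)
    have "subseq [Q ! i] (drop i Q)" using v by (simp add: Cons_nth_drop_Suc[symmetric])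
    moreover have "subseq [Q ! i] (drop f (\<delta> u))" using v by (simp add: Cons_nth_drop_Suc[symmetric])
    ultimately show ?thesis using Nil x v
      by (intro exI[of _ "[u]"]) (auto simp: is_path_single)
  next
    case (Cons y p'')
    obtain i' u' f' where y: "y = (i',u',f')" by (cases y) auto
    from Cons.prems have e: "(x,y) \<in> H_edges Q V E \<delta>" and pp: "is_path (H_vertices Q V \<delta>) (H_edges Q V E \<delta>) p'"
      using Cons by (auto simp: is_path_cons2)
    from e x y have v: "i < length Q" "u \<in> V" "f < length (\<delta> u)" "Q ! i = \<delta> u ! f" "i < i'"
      and alt: "(u \<noteq> u' \<and> has_path V E u u') \<or> (u = u' \<and> f < f')"
      by (auto simp: H_edges_def H_vertices_def)
    have "\<exists>P. is_path V E P \<and> hd P = u'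
      \<and> subseq (map (\<lambda>(i, u, f). Q ! i) p') (drop i' Q)
      \<and> subseq (map (\<lambda>(i, u, f). Q ! i) p') (drop f' (\<delta> u') @ concat (map \<delta> (tl P)))"
      using Cons.IH[OF pp] unfolding Cons y list.sel fst_conv snd_conv by assumption
    then obtain P where P: "is_path V E P" "hd P = u'"
      and sQ: "subseq (map (\<lambda>(i, u, f). Q ! i) p') (drop i' Q)"
      and sG: "subseq (map (\<lambda>(i, u, f). Q ! i) p') (drop f' (\<delta> u') @ concat (map \<delta> (tl P)))"
      by blast
    define S' where "S' = map (\<lambda>(i, u, f). Q ! i) p'"
    have dQ: "drop i Q = Q ! i # drop (Suc i) Q" using v(1) by (metis Cons_nth_drop_Suc)
    have dG: "drop f (\<delta> u) = \<delta> u ! f # drop (Suc f) (\<delta> u)" using v(3) by (metis Cons_nth_drop_Suc)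
    have sQ0: "subseq S' (drop (Suc i) Q)"
      using subseq_drop_mono[OF sQ, of "Suc i"] v unfolding S'_def by simp
    have sQ': "subseq (Q ! i # S') (drop i Q)"
      using sQ0 dQ by simp
    have eqm: "map (\<lambda>(i, u, f). Q ! i) (x # p') = Q ! i # S'"
      by (simp add: x S'_def)
    from alt show ?thesis
    proof
      assume a: "u = u' \<and> f < f'"
      have "subseq S' (drop (Suc f) (\<delta> u) @ concat (map \<delta> (tl P)))"
        using subseq_drop_mono2[of S' f' "\<delta> u'" "concat (map \<delta> (tl P))" "Suc f"] sG a v
        by (simp add: S'_def)
      then show ?thesis unfolding eqm using sQ' P a x dG v
        by (intro exI[of _ P]) simp
    next
      assume a: "u \<noteq> u' \<and> has_path V E u u'"
      then obtain R where R: "is_path V E R" "hd R = u" "last R = u'"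
        by (auto simp: has_path_def)
      have R2: "R = u # tl R" "tl R \<noteq> []" using R a
        by (cases R; auto simp: is_path_def)+
      have NP: "is_path V E (R @ tl P)" using is_path_append[OF R(1) P(1)] R P by simp
      have lt: "last (tl R) = u'" using R R2 by (metis last_ConsR)
      have "suffix (\<delta> u') (concat (map \<delta> (tl R)))"
      proof -
        have "tl R = butlast (tl R) @ [u']" using lt R2(2) by (metis append_butlast_last_id)
        moreover have "concat (map \<delta> (butlast (tl R) @ [u'])) = concat (map \<delta> (butlast (tl R))) @ \<delta> u'"
          by simp
        ultimately have "concat (map \<delta> (tl R)) = concat (map \<delta> (butlast (tl R))) @ \<delta> u'"
          by argo
        thus ?thesis unfolding suffix_def by blast
      qed
      hence suf: "suffix (\<delta> u' @ concat (map \<delta> (tl P))) (drop (Suc f) (\<delta> u) @ concat (map \<delta> (tl R)) @ concat (map \<delta> (tl P)))"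
        by (auto simp: suffix_def)
      have "subseq S' (\<delta> u' @ concat (map \<delta> (tl P)))"
        using subseq_drop_mono2[of S' f' "\<delta> u'" "concat (map \<delta> (tl P))" 0] sG by (simp add: S'_def)
      hence ss: "subseq S' (drop (Suc f) (\<delta> u) @ concat (map \<delta> (tl R)) @ concat (map \<delta> (tl P)))"
        using subseq_suffix_trans suf by blast
      have tt: "tl (R @ tl P) = tl R @ tl P" using R2 by (metis append_Cons list.sel(3))
      have Rne: "R \<noteq> []" using R(1) by (simp add: is_path_def)
      have h: "hd (R @ tl P) = u" using Rne R by simp
      have g: "subseq (Q ! i # S') (drop f (\<delta> u) @ concat (map \<delta> (tl (R @ tl P))))"
      proof -
        have "subseq (Q ! i # S') (Q ! i # drop (Suc f) (\<delta> u) @ concat (map \<delta> (tl R @ tl P)))"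
          using ss by simp
        thus ?thesis unfolding tt dG v(4) by simp
      qed
      note sQ'' = sQ'[folded eqm] and g' = g[folded eqm]
      show ?thesis using NP h sQ'' g' unfolding x list.sel fst_conv snd_conv
        by (intro exI[of _ "R @ tl P"] conjI) assumption+
    qed
  qed
qed

theorem lemma3:
  fixes Q :: "'c list" and V :: "'v set" and E :: "('v \<times> 'v) set" and \<delta> :: "'v \<Rightarrow> 'c list"
    and p :: "(nat \<times> 'v \<times> nat) list"
  assumes "pangenome_graph V E \<delta>"
    and "is_path (H_vertices Q V \<delta>) (H_edges Q V E \<delta>) p"
  shows "common_subseq Q V E \<delta> (map (\<lambda>(i, u, f). Q ! i) p)"
proof -
  from main_inv[OF assms(2)] obtain P where P: "is_path V E P" "hd P = fst (snd (hd p))"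
     and sQ: "subseq (map (\<lambda>(i, u, f). Q ! i) p) (drop (fst (hd p)) Q)"
     and sG: "subseq (map (\<lambda>(i, u, f). Q ! i) p) (drop (snd (snd (hd p))) (\<delta> (fst (snd (hd p)))) @ concat (map \<delta> (tl P)))"
    by blast
  have "subseq (map (\<lambda>(i, u, f). Q ! i) p) Q" using subseq_drop_mono[OF sQ, of 0] by simp
  moreover have "spell \<delta> P = \<delta> (hd P) @ concat (map \<delta> (tl P))"
    using P(1) by (cases P) (auto simp: spell_def is_path_def)
  hence "subseq (map (\<lambda>(i, u, f). Q ! i) p) (spell \<delta> P)"
    using subseq_drop_mono2[OF sG[folded P(2)] le0] by simp
  ultimately show ?thesis using P unfolding common_subseq_def by blast
qed

end
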